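(* Let $S=\{x_1,\ldots,x_n\}$ be a factor-closed set of $n$ distinct positive integers, let $k\in\mathbb{N}$, and let $F(r;n_1,\ldots,n_k)$ ($r,n_1,\ldots,n_k\in\mathbb{N}$) be even $\pmod r$ with respect to $n_1,\ldots,n_k$. Let $I=\{2,3,\ldots,k+1\}$ if $k$ is even and $I=\{1,2,\ldots,k+1\}$ if $k$ is odd. Then \[ \det_I\bigl(F(x_{i_1};x_{i_2},\ldots,x_{i_{k+1}})\bigr)_{1\le i_1,\ldots,i_{k+1}\le n}=(x_1\cdots x_n)^k\prod_{v=1}^n\alpha_{x_v}(x_v,\ldots,x_v). \]
   Context: A set $S$ of positive integers is factor-closed if every positive divisor of every element of $S$ lies in $S$. $F$ is even $\pmod r$ if $F(r;n_1,\ldots,n_k)=F(r;\gcd(n_1,r),\ldots,\gcd(n_k,r))$ for all $r,n_1,\ldots,n_k$. $c(k,n):=\sum_{d\mid\gcd(k,n)}\mu(k/d)\,d$ is the Ramanujan sum. The finite Fourier coefficients are, for $d_1,\ldots,d_k\mid r$, \[ \alpha_r(d_1,\ldots,d_k):=\frac{1}{r^k}\sum_{\delta_1,\ldots,\delta_k\mid r}F(r;\delta_1,\ldots,\delta_k)\,c\Bigl(\frac{r}{\delta_1},\frac{r}{d_1}\Bigr)\cdots c\Bigl(\frac{r}{\delta_k},\frac{r}{d_k}\Bigr). \] For a $K$-dimensional matrix $A$ of order $n$ and $J\subseteq\{1,\ldots,K\}$, with $\eta_j=1$ if $j\in J$ and $0$ otherwise, the hyperdeterminant is $\det_JA:=\frac{1}{n!}\sum_{\sigma_1,\ldots,\sigma_K\in\mathfrak{S}_n}\prod_{j=1}^K\mathrm{sgn}(\sigma_j)^{\eta_j}\prod_{v=1}^nA(\sigma_1(v),\ldots,\sigma_K(v))$,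 $\mathfrak{S}_n$ the symmetric group on $\{1,\ldots,n\}$. *)

theory Defs
  imports "HOL-Combinatorics.Permutations" "HOL-Computational_Algebra.Squarefree" Complex_Main
begin

definition moebius_mu :: "nat \<Rightarrow> int" where
  "moebius_mu m = (if squarefree m then (-1) ^ card (prime_factors m) else 0)"

definition ramanujan_c :: "nat \<Rightarrow> nat \<Rightarrow> int" where
  "ramanujan_c k n = (\<Sum>d\<in>{d. d dvd gcd k n}. moebius_mu (k div d) * int d)"

definition factor_closed :: "nat set \<Rightarrow> bool" where
  "factor_closed S \<longleftrightarrow> (\<forall>m\<in>S. \<forall>d. 0 < d \<and> d dvd m \<longrightarrow> d \<in> S)"

text \<open>F(r; n_1,...,n_k) is represented as F r [n_1,...,n_k].\<close>
definition even_mod :: "nat \<Rightarrow> (nat \<Rightarrow> nat list \<Rightarrow> complex) \<Rightarrow> bool" where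
  "even_mod k F \<longleftrightarrow> (\<forall>r ns. 0 < r \<and> length ns = k \<and> (\<forall>m\<in>set ns. 0 < m) \<longrightarrow>
      F r ns = F r (map (\<lambda>m. gcd m r) ns))"

definition fourier_alpha :: "nat \<Rightarrow> (nat \<Rightarrow> nat list \<Rightarrow> complex) \<Rightarrow> nat \<Rightarrow> nat list \<Rightarrow> complex" where
  "fourier_alpha k F r ds = (1 / of_nat r ^ k) *
     (\<Sum>\<delta>s\<in>{\<delta>s. length \<delta>s = k \<and> (\<forall>\<delta>\<in>set \<delta>s. \<delta> dvd r)}.
        F r \<delta>s * (\<Prod>i<k. of_int (ramanujan_c (r div (\<delta>s ! i)) (r div (ds ! i)))))"

text \<open>Hyperdeterminant det_J A of a K-dimensional matrix A of order n;
  A is indexed by lists [i_1,...,i_K] with entries in {1..n}; J \<subseteq> {1..K}.\<close>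
definition hyperdet :: "nat \<Rightarrow> nat \<Rightarrow> nat set \<Rightarrow> (nat list \<Rightarrow> complex) \<Rightarrow> complex" where
  "hyperdet K n J A = (1 / of_nat (fact n)) *
     (\<Sum>\<sigma>\<in>PiE {1..K} (\<lambda>_. {p. p permutes {1..n}}).
        (\<Prod>j\<in>{1..K}. if j \<in> J then of_int (sign (\<sigma> j)) else 1) *
        (\<Prod>v\<in>{1..n}. A (map (\<lambda>j. \<sigma> j v) [1..<K+1])))"

end

theory Submission
  imports Defs
begin


lemma mu_1: "moebius_mu 1 = 1"
  by (simp add: moebius_mu_def)

lemma mu_Suc0: "moebius_mu (Suc 0) = 1"
  using mu_1 by simp

lemma mu_mult_prime:
  assumes p: "prime (p::nat)" and np: "\<not> p dvd t" and t: "t > 0"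
  shows "moebius_mu (t * p) = - moebius_mu t"
proof -
  have cop: "coprime t p" using p np by (simp add: prime_imp_coprime coprime_commute)
  have sq: "squarefree (t * p) \<longleftrightarrow> squarefree t"
    using squarefree_mult_coprime[OF cop _ squarefree_prime[OF p]] squarefree_multD(1)[of t p] by blast
  have pf: "prime_factors (t * p) = insert p (prime_factors t)"
  proof -
    have "prime_factors (t * p) = prime_factors t \<union> prime_factors p"
      using t p by (intro prime_factors_product) auto
    then show ?thesis using p by (simp add: prime_prime_factors)
  qed
  have "p \<notin> prime_factors t" using np by auto
  then have "card (prime_factors (t * p)) = Suc (card (prime_factors t))"
    by (simp add: pf)
  then show ?thesis using sq by (simp add: moebius_mu_def)
qed

lemma mu_sq:
  assumes "prime (p::nat)" "p^2 dvd t"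
  shows "moebius_mu t = 0"
  using assms not_squarefreeI[of p t] prime_gt_1_nat[of p] by (auto simp: moebius_mu_def)

lemma mu_sum:
  assumes m: "(m::nat) > 0"
  shows "(\<Sum>t\<in>{t. t dvd m}. moebius_mu t) = (if m = 1 then 1 else 0)"
proof (cases "m = 1")
  case True
  then show ?thesis by (simp add: mu_Suc0)
next
  case False
  then obtain p where p: "prime p" "p dvd m" using prime_factor_nat by blast
  define A where "A = {t. t dvd m \<and> \<not> p dvd t}"
  define B where "B = {t. t dvd m \<and> p dvd t}"
  have fin: "finite {t. t dvd m}" using m by simp
  have finA: "finite A" and finB: "finite B" unfolding A_def B_def using fin
    by (auto intro: finite_subset)
  have split: "{t. t dvd m} = A \<union> B" "A \<inter> B = {}" unfolding A_def B_def by auto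
  have pp: "p > 0" using p prime_gt_0_nat by blast
  have Bsub: "(\<lambda>t. t * p) ` A \<subseteq> B"
  proof
    fix s assume "s \<in> (\<lambda>t. t * p) ` A"
    then obtain t where t: "t \<in> A" "s = t * p" by blast
    have "coprime t p" using t p unfolding A_def
      by (simp add: prime_imp_coprime coprime_commute)
    then have "t * p dvd m" using t p unfolding A_def by (simp add: divides_mult)
    then show "s \<in> B" using t unfolding B_def by simp
  qed
  have B0: "moebius_mu s = 0" if s: "s \<in> B - (\<lambda>t. t * p) ` A" for s
  proof (rule ccontr)
    assume nz: "moebius_mu s \<noteq> 0"
    from s have sB: "s dvd m" "p dvd s" unfolding B_def by auto
    then obtain u where u: "s = u * p" by (metis dvd_def mult.commute)
    have "\<not> p dvd u"
    proof
      assume "p dvd u"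
      then have "p^2 dvd s" using u by (auto simp: power2_eq_square)
      then show False using nz mu_sq[OF p(1)] by blast
    qed
    moreover have "u dvd m" using sB u by (auto intro: dvd_trans)
    ultimately have "u \<in> A" unfolding A_def by simp
    then show False using s u by blast
  qed
  have "(\<Sum>t\<in>{t. t dvd m}. moebius_mu t) = sum moebius_mu A + sum moebius_mu B"
    using split finA finB by (simp add: sum.union_disjoint)
  also have "sum moebius_mu B = sum moebius_mu ((\<lambda>t. t * p) ` A)"
    using Bsub B0 finB by (intro sum.mono_neutral_right) auto
  also have "\<dots> = (\<Sum>t\<in>A. moebius_mu (t * p))"
    using pp by (subst sum.reindex) (auto simp: inj_on_def)
  also have "\<dots> = (\<Sum>t\<in>A. - moebius_mu t)"
  proof (rule sum.cong)
    fix t assume "t \<in> A"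
    then have "\<not> p dvd t" "t > 0" using m unfolding A_def by (auto intro: Nat.gr0I)
    then show "moebius_mu (t * p) = - moebius_mu t" using mu_mult_prime[OF p(1)] by blast
  qed simp
  finally show ?thesis using False by (simp add: sum_negf)
qed

lemma mu_interval_sum:
  assumes "d dvd c" "(c::nat) > 0"
  shows "(\<Sum>e\<in>{e. d dvd e \<and> e dvd c}. (of_int (moebius_mu (e div d)) :: complex)) = (if d = c then 1 else 0)"
proof -
  have d: "d > 0" using assms by (auto intro: Nat.gr0I)
  obtain q where q: "c = d * q" using assms(1) by (auto elim: dvdE)
  have cdq: "c div d = q" using q d by simp
  have cd: "c div d > 0" using assms d q cdq by (cases q) auto
  have eq: "{e. d dvd e \<and> e dvd c} = (\<lambda>t. d * t) ` {t. t dvd c div d}"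
  proof (safe)
    fix e assume "d dvd e" "e dvd c"
    then obtain t where t: "e = d * t" by (auto elim: dvdE)
    have "t dvd c div d" using \<open>e dvd c\<close> t d unfolding cdq q by simp
    then show "e \<in> (\<lambda>t. d * t) ` {t. t dvd c div d}" using t by blast
  next
    fix t assume "t dvd c div d"
    then show "d * t dvd c" using d unfolding cdq q by simp
  qed simp
  have "(\<Sum>e\<in>{e. d dvd e \<and> e dvd c}. (of_int (moebius_mu (e div d)) :: complex))
       = (\<Sum>t\<in>{t. t dvd c div d}. of_int (moebius_mu t))"
    unfolding eq using d by (subst sum.reindex) (auto simp: inj_on_def)
  also have "\<dots> = of_int (\<Sum>t\<in>{t. t dvd c div d}. moebius_mu t)" by simp
  also have "\<dots> = (if d = c then 1 else 0)"
    using mu_sum[OF cd] d unfolding cdq by (simp add: q)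
  finally show ?thesis .
qed



lemma finite_divs_PiE:
  assumes "finite J" "\<forall>j\<in>J. (c j::nat) > 0"
  shows "finite (PiE J (\<lambda>j. {d. d dvd c j}))"
  using assms by (intro finite_PiE) auto

lemma mobius_inv_multi:
  fixes \<Phi> :: "(nat \<Rightarrow> nat) \<Rightarrow> complex" and J :: "nat set" and c :: "nat \<Rightarrow> nat"
  assumes J: "finite J" and c: "\<forall>j\<in>J. c j > 0"
  shows "(\<Sum>e\<in>PiE J (\<lambda>j. {d. d dvd c j}). \<Sum>d\<in>PiE J (\<lambda>j. {t. t dvd e j}).
            \<Phi> d * (\<Prod>j\<in>J. of_int (moebius_mu (e j div d j)))) = \<Phi> (restrict c J)"
proof -
  define Dc where "Dc = PiE J (\<lambda>j. {d. d dvd c j})"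
  have finDc: "finite Dc" unfolding Dc_def using finite_divs_PiE[OF J c] .
  have a: "PiE J (\<lambda>j. {t. t dvd e j}) = {d. d \<in> Dc \<and> (\<forall>j\<in>J. d j dvd e j)}" if e: "e \<in> Dc" for e
    using e unfolding Dc_def by (auto simp: PiE_iff extensional_def intro: dvd_trans)
  have c': "{e. e \<in> Dc \<and> (\<forall>j\<in>J. d j dvd e j)} = PiE J (\<lambda>j. {e. d j dvd e \<and> e dvd c j})"
    if d: "d \<in> Dc" for d
    using d unfolding Dc_def by (auto simp: PiE_iff extensional_def)
  have "(\<Sum>e\<in>Dc. \<Sum>d\<in>PiE J (\<lambda>j. {t. t dvd e j}). \<Phi> d * (\<Prod>j\<in>J. of_int (moebius_mu (e j div d j))))
      = (\<Sum>e\<in>Dc. \<Sum>d\<in>{d. d \<in> Dc \<and> (\<forall>j\<in>J. d j dvd e j)}. \<Phi> d * (\<Prod>j\<in>J. of_int (moebius_mu (e j div d j))))"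
    using a by (intro sum.cong) auto
  also have "\<dots> = (\<Sum>d\<in>Dc. \<Sum>e\<in>{e. e \<in> Dc \<and> (\<forall>j\<in>J. d j dvd e j)}. \<Phi> d * (\<Prod>j\<in>J. of_int (moebius_mu (e j div d j))))"
    by (rule sum.swap_restrict[OF finDc finDc])
  also have "\<dots> = (\<Sum>d\<in>Dc. \<Phi> d * (\<Prod>j\<in>J. (if d j = c j then 1 else 0)))"
  proof (rule sum.cong[OF refl])
    fix d assume d: "d \<in> Dc"
    have "(\<Sum>e\<in>{e. e \<in> Dc \<and> (\<forall>j\<in>J. d j dvd e j)}. \<Phi> d * (\<Prod>j\<in>J. of_int (moebius_mu (e j div d j))))
        = \<Phi> d * (\<Sum>e\<in>PiE J (\<lambda>j. {e. d j dvd e \<and> e dvd c j}). (\<Prod>j\<in>J. of_int (moebius_mu (e j div d j))))"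
      unfolding c'[OF d] by (simp add: sum_distrib_left)
    also have "(\<Sum>e\<in>PiE J (\<lambda>j. {e. d j dvd e \<and> e dvd c j}). (\<Prod>j\<in>J. (of_int (moebius_mu (e j div d j)) :: complex)))
        = (\<Prod>j\<in>J. \<Sum>e\<in>{e. d j dvd e \<and> e dvd c j}. of_int (moebius_mu (e div d j)))"
      using J c by (subst prod_sum_PiE) auto
    also have "\<dots> = (\<Prod>j\<in>J. (if d j = c j then 1 else 0))"
      using d c unfolding Dc_def by (intro prod.cong refl mu_interval_sum) (auto simp: PiE_iff)
    finally show "(\<Sum>e\<in>{e. e \<in> Dc \<and> (\<forall>j\<in>J. d j dvd e j)}. \<Phi> d * (\<Prod>j\<in>J. of_int (moebius_mu (e j div d j))))
        = \<Phi> d * (\<Prod>j\<in>J. (if d j = c j then 1 else 0))" .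
  qed
  also have "\<dots> = (\<Sum>d\<in>Dc. if d = restrict c J then \<Phi> d else 0)"
  proof (rule sum.cong[OF refl])
    fix d assume d: "d \<in> Dc"
    show "\<Phi> d * (\<Prod>j\<in>J. (if d j = c j then 1 else 0)) = (if d = restrict c J then \<Phi> d else 0)"
    proof (cases "\<forall>j\<in>J. d j = c j")
      case True
      then have "d = restrict c J" using d unfolding Dc_def by (auto simp: PiE_iff extensional_def)
      then show ?thesis using True by simp
    next
      case False
      then obtain j where "j \<in> J" "d j \<noteq> c j" by blast
      then have "(\<Prod>j\<in>J. (if d j = c j then 1 else 0)) = (0::complex)"
        using J by (intro prod_zero) auto
      moreover have "d \<noteq> restrict c J" using \<open>j \<in> J\<close> \<open>d j \<noteq> c j\<close> by auto
      ultimately show ?thesis by simp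
    qed
  qed
  also have "\<dots> = \<Phi> (restrict c J)"
    using finDc by (simp add: Dc_def)
  finally show ?thesis unfolding Dc_def .
qed



lemma perm_le_eq:
  fixes x :: "nat \<Rightarrow> nat"
  assumes p: "p permutes N" and q: "q permutes N" and N: "finite N" and inj: "inj_on x N"
    and le: "\<forall>v\<in>N. x (q v) \<le> x (p v)"
  shows "\<forall>v\<in>N. q v = p v"
proof
  fix v assume v: "v \<in> N"
  have "sum (\<lambda>v. x (q v)) N = sum x N" using sum.permute[OF q, of x] by (simp add: comp_def)
  also have "\<dots> = sum (\<lambda>v. x (p v)) N" using sum.permute[OF p, of x] by (simp add: comp_def)
  finally have "x (q v) = x (p v)" using sum_mono_inv[of "\<lambda>v. x (q v)" N "\<lambda>v. x (p v)" v] le v N by auto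
  moreover have "q v \<in> N" "p v \<in> N" using v p q by (auto simp: permutes_in_image)
  ultimately show "q v = p v" using inj by (auto dest: inj_onD)
qed

lemma det_repeat_zero:
  fixes h :: "nat \<Rightarrow> nat \<Rightarrow> complex"
  assumes N: "finite N" and ab: "a \<in> N" "b \<in> N" "a \<noteq> b" and \<nu>: "\<nu> a = \<nu> b"
  shows "(\<Sum>\<tau>\<in>{\<tau>. \<tau> permutes N}. of_int (sign \<tau>) * (\<Prod>v\<in>N. h (\<tau> v) (\<nu> v))) = 0"
proof -
  define s where "s = Transposition.transpose a b"
  have s: "s permutes N" unfolding s_def by (rule permutes_swap_id[OF ab(1,2)])
  define f where "f = (\<lambda>\<tau>. of_int (sign \<tau>) * (\<Prod>v\<in>N. h (\<tau> v) (\<nu> v)))"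
  have "sum f {\<tau>. \<tau> permutes N} = sum (\<lambda>\<tau>. f (\<tau> \<circ> s)) {\<tau>. \<tau> permutes N}"
    by (rule sum.reindex_bij_witness[of _ "\<lambda>\<tau>. \<tau> \<circ> s" "\<lambda>\<tau>. \<tau> \<circ> s"])
       (auto simp: s_def comp_assoc intro: permutes_compose[OF s[unfolded s_def]])
  also have "\<dots> = sum (\<lambda>\<tau>. - f \<tau>) {\<tau>. \<tau> permutes N}"
  proof (rule sum.cong[OF refl])
    fix \<tau> assume "\<tau> \<in> {\<tau>. \<tau> permutes N}"
    then have \<tau>: "\<tau> permutes N" by simp
    have sg: "sign (\<tau> \<circ> s) = - sign \<tau>"
      using sign_compose[OF permutes_imp_permutation[OF N \<tau>] permutes_imp_permutation[OF N s]]
      ab by (simp add: s_def sign_swap_id)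
    have "(\<Prod>v\<in>N. h ((\<tau> \<circ> s) v) (\<nu> v)) = (\<Prod>v\<in>N. h (\<tau> (s v)) (\<nu> (s v)))"
      using \<nu> by (intro prod.cong refl) (auto simp: s_def transpose_def)
    also have "\<dots> = (\<Prod>v\<in>N. h (\<tau> v) (\<nu> v))"
      using prod.permute[OF s, of "\<lambda>v. h (\<tau> v) (\<nu> v)"] by (simp add: comp_def)
    finally show "f (\<tau> \<circ> s) = - f \<tau>" unfolding f_def sg by simp
  qed
  also have "\<dots> = - sum f {\<tau>. \<tau> permutes N}" by (simp add: sum_negf)
  finally have "sum f {\<tau>. \<tau> permutes N} = 0" by simp
  then show ?thesis unfolding f_def .
qed

lemma det_tri:
  fixes x :: "nat \<Rightarrow> nat"
  assumes N: "finite N" and inj: "inj_on x N" and pos: "\<forall>v\<in>N. x v > 0" and p: "p permutes N"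
  shows "(\<Sum>\<tau>\<in>{\<tau>. \<tau> permutes N}. of_int (sign \<tau>) *
            (\<Prod>v\<in>N. (if x (p v) dvd x (\<tau> v) then 1 else 0 :: complex))) = of_int (sign p)"
proof -
  define f where "f = (\<lambda>\<tau>. of_int (sign \<tau>) * (\<Prod>v\<in>N. (if x (p v) dvd x (\<tau> v) then 1 else 0 :: complex)))"
  have fin: "finite {\<tau>. \<tau> permutes N}" using N by (rule finite_permutations)
  have z: "f \<tau> = 0" if \<tau>: "\<tau> \<in> {\<tau>. \<tau> permutes N} - {p}" for \<tau>
  proof (rule ccontr)
    assume "f \<tau> \<noteq> 0"
    then have "(\<Prod>v\<in>N. (if x (p v) dvd x (\<tau> v) then 1 else 0 :: complex)) \<noteq> 0" unfolding f_def by auto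
    then have dv: "\<forall>v\<in>N. x (p v) dvd x (\<tau> v)" using N by (auto split: if_splits)
    have "\<forall>v\<in>N. x (p v) \<le> x (\<tau> v)"
    proof
      fix v assume "v \<in> N"
      then have "\<tau> v \<in> N" using \<tau> by (auto simp: permutes_in_image)
      then show "x (p v) \<le> x (\<tau> v)" using dv pos \<open>v \<in> N\<close> by (auto intro: dvd_imp_le)
    qed
    then have "\<forall>v\<in>N. p v = \<tau> v" using perm_le_eq[of \<tau> N p x] \<tau> p N inj by auto
    moreover have "\<forall>v. v \<notin> N \<longrightarrow> p v = \<tau> v" using p \<tau> by (auto simp: permutes_not_in)
    ultimately have "p = \<tau>" by blast
    then show False using \<tau> by simp
  qed
  have "sum f {\<tau>. \<tau> permutes N} = f p + sum f ({\<tau>. \<tau> permutes N} - {p})"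
    using fin p by (subst sum.remove[of _ p]) auto
  also have "sum f ({\<tau>. \<tau> permutes N} - {p}) = 0" using z by (intro sum.neutral) blast
  also have "f p = of_int (sign p)" unfolding f_def by simp
  finally show ?thesis unfolding f_def by simp
qed



definition Phi :: "nat \<Rightarrow> (nat \<Rightarrow> nat list \<Rightarrow> complex) \<Rightarrow> nat \<Rightarrow> (nat \<Rightarrow> nat) \<Rightarrow> complex" where
  "Phi k F r d = F r (map d [2..<k+2])"

definition gg :: "nat \<Rightarrow> (nat \<Rightarrow> nat list \<Rightarrow> complex) \<Rightarrow> nat \<Rightarrow> (nat \<Rightarrow> nat) \<Rightarrow> complex" where
  "gg k F r e = (\<Sum>d\<in>PiE {2..k+1} (\<lambda>j. {t. t dvd e j}).
      Phi k F r d * (\<Prod>j\<in>{2..k+1}. of_int (moebius_mu (e j div d j))))"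

definition GG :: "nat \<Rightarrow> (nat \<Rightarrow> nat list \<Rightarrow> complex) \<Rightarrow> (nat \<Rightarrow> nat) \<Rightarrow> nat \<Rightarrow> (nat \<Rightarrow> nat) \<Rightarrow> complex" where
  "GG k F x i0 m = (if \<forall>j\<in>{2..k+1}. x (m j) dvd x i0 then gg k F (x i0) (\<lambda>j. x (m j)) else 0)"

definition EE :: "(nat \<Rightarrow> nat) \<Rightarrow> nat \<Rightarrow> nat \<Rightarrow> complex" where
  "EE x i m = (if x m dvd x i then 1 else 0)"

lemma prod_indicator:
  assumes "finite A"
  shows "(\<Prod>j\<in>A. if P j then 1 else 0 :: complex) = (if \<forall>j\<in>A. P j then 1 else 0)"
proof (cases "\<forall>j\<in>A. P j")
  case True then show ?thesis by simp
next
  case False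
  then obtain j where "j \<in> A" "\<not> P j" by blast
  then show ?thesis using assms False by (subst prod_zero) auto
qed

lemma gg_restrict: "gg k F r (restrict f {2..k+1}) = gg k F r f"
  unfolding gg_def by (intro sum.cong PiE_cong prod.cong) auto

lemma Phi_cong: "(\<And>j. j \<in> {2..k+1} \<Longrightarrow> d j = d' j) \<Longrightarrow> Phi k F r d = Phi k F r d'"
  unfolding Phi_def by (intro arg_cong[where f="F r"] map_cong) auto

lemma entry_decomp:
  fixes n k :: nat and x :: "nat \<Rightarrow> nat" and F :: "nat \<Rightarrow> nat list \<Rightarrow> complex"
  assumes inj: "inj_on x {1..n}" and pos: "\<forall>i\<in>{1..n}. 0 < x i"
    and fc: "factor_closed (x ` {1..n})" and ev: "even_mod k F"
    and i0: "i0 \<in> {1..n}" and w: "\<forall>j\<in>{2..k+1}. w j \<in> {1..n}"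
  shows "F (x i0) (map (\<lambda>j. x (w j)) [2..<k+2]) =
    (\<Sum>m\<in>PiE {2..k+1} (\<lambda>_. {1..n}). GG k F x i0 m * (\<Prod>j\<in>{2..k+1}. EE x (w j) (m j)))"
proof -
  define J where "J = {2..k+1}"
  define N where "N = {1..n}"
  define r where "r = x i0"
  have r: "r > 0" using pos i0 unfolding r_def by auto
  have rS: "r \<in> x ` N" using i0 unfolding r_def N_def by auto
  define c where "c = (\<lambda>j. gcd (x (w j)) r)"
  have cpos: "\<forall>j\<in>J. c j > 0" unfolding c_def using r by auto
  have finJ: "finite J" unfolding J_def by simp
  have setJ: "set [2..<k+2] = J" unfolding J_def by auto
  have "F r (map (\<lambda>j. x (w j)) [2..<k+2]) = F r (map (\<lambda>m. gcd m r) (map (\<lambda>j. x (w j)) [2..<k+2]))"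
  proof -
    have "length (map (\<lambda>j. x (w j)) [2..<k+2]) = k" by (simp, arith)
    moreover have "\<forall>m\<in>set (map (\<lambda>j. x (w j)) [2..<k+2]). 0 < m"
    proof
      fix m assume "m \<in> set (map (\<lambda>j. x (w j)) [2..<k+2])"
      then obtain j where "j \<in> J" "m = x (w j)" unfolding setJ[symmetric] by auto
      then show "0 < m" using w pos unfolding J_def by auto
    qed
    ultimately show ?thesis using ev r unfolding even_mod_def by blast
  qed
  also have "\<dots> = Phi k F r (restrict c J)"
    unfolding Phi_def map_map by (intro arg_cong[where f="F r"] map_cong refl) (auto simp: c_def J_def)
  also have "\<dots> = (\<Sum>e\<in>PiE J (\<lambda>j. {d. d dvd c j}). gg k F r e)"
    unfolding gg_def J_def[symmetric] using mobius_inv_multi[OF finJ cpos, of "Phi k F r"] by simp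
  also have "\<dots> = (\<Sum>m\<in>PiE J (\<lambda>j. {m\<in>N. x m dvd c j}). gg k F r (restrict (\<lambda>j. x (m j)) J))"
  proof (rule sum.reindex_bij_witness[of _ "\<lambda>m. restrict (\<lambda>j. x (m j)) J" "\<lambda>e. restrict (\<lambda>j. inv_into N x (e j)) J"])
    fix e assume e: "e \<in> PiE J (\<lambda>j. {d. d dvd c j})"
    have inS: "e j \<in> x ` N" if j: "j \<in> J" for j
    proof -
      have "e j dvd c j" using e j by auto
      then have "e j dvd r" unfolding c_def by (auto intro: dvd_trans)
      moreover have "e j > 0" using \<open>e j dvd c j\<close> cpos j by (metis dvd_0_left_iff neq0_conv)
      ultimately show ?thesis using fc rS unfolding factor_closed_def N_def by blast
    qed
    have ie: "restrict (\<lambda>j. x (restrict (\<lambda>j. inv_into N x (e j)) J j)) J = e"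
      using e inS by (auto simp: f_inv_into_f PiE_iff extensional_def)
    then show "restrict (\<lambda>j. x (restrict (\<lambda>j. inv_into N x (e j)) J j)) J = e" .
    from ie show "gg k F r (restrict (\<lambda>j. x (restrict (\<lambda>j. inv_into N x (e j)) J j)) J) = gg k F r e" by simp
    show "restrict (\<lambda>j. inv_into N x (e j)) J \<in> PiE J (\<lambda>j. {m \<in> N. x m dvd c j})"
      using e inS by (auto simp: f_inv_into_f inv_into_into)
  next
    fix m assume m: "m \<in> PiE J (\<lambda>j. {m \<in> N. x m dvd c j})"
    show "restrict (\<lambda>j. inv_into N x (restrict (\<lambda>j. x (m j)) J j)) J = m"
      using m inj unfolding N_def by (auto simp: PiE_iff extensional_def)
    show "restrict (\<lambda>j. x (m j)) J \<in> PiE J (\<lambda>j. {d. d dvd c j})" using m by auto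
  qed
  also have "\<dots> = (\<Sum>m\<in>PiE J (\<lambda>j. {m\<in>N. x m dvd c j}). gg k F r (\<lambda>j. x (m j)))"
    unfolding J_def gg_restrict ..
  also have "\<dots> = (\<Sum>m\<in>PiE J (\<lambda>_. N). if m \<in> PiE J (\<lambda>j. {m\<in>N. x m dvd c j}) then gg k F r (\<lambda>j. x (m j)) else 0)"
  proof -
    have sub: "PiE J (\<lambda>j. {m\<in>N. x m dvd c j}) \<subseteq> PiE J (\<lambda>_. N)" by (rule PiE_mono) auto
    have fin: "finite (PiE J (\<lambda>_. N))" using finJ unfolding N_def by (intro finite_PiE) auto
    have "(\<Sum>m\<in>PiE J (\<lambda>j. {m\<in>N. x m dvd c j}). gg k F r (\<lambda>j. x (m j)))
        = (\<Sum>m\<in>PiE J (\<lambda>_. N) \<inter> PiE J (\<lambda>j. {m\<in>N. x m dvd c j}). gg k F r (\<lambda>j. x (m j)))"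
      using Int_absorb1[OF sub] by simp
    also have "\<dots> = (\<Sum>m\<in>PiE J (\<lambda>_. N). if m \<in> PiE J (\<lambda>j. {m\<in>N. x m dvd c j}) then gg k F r (\<lambda>j. x (m j)) else 0)"
      by (rule sum.inter_restrict[OF fin])
    finally show ?thesis .
  qed
  also have "\<dots> = (\<Sum>m\<in>PiE J (\<lambda>_. N). GG k F x i0 m * (\<Prod>j\<in>J. EE x (w j) (m j)))"
  proof (rule sum.cong[OF refl])
    fix m assume m: "m \<in> PiE J (\<lambda>_. N)"
    have "(\<Prod>j\<in>J. EE x (w j) (m j)) = (if \<forall>j\<in>J. x (m j) dvd x (w j) then 1 else 0)"
      unfolding EE_def using finJ by (rule prod_indicator)
    moreover have "(m \<in> PiE J (\<lambda>j. {m\<in>N. x m dvd c j})) \<longleftrightarrow> (\<forall>j\<in>J. x (m j) dvd r) \<and> (\<forall>j\<in>J. x (m j) dvd x (w j))"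
      using m unfolding c_def by (auto simp: PiE_iff)
    ultimately show "(if m \<in> PiE J (\<lambda>j. {m\<in>N. x m dvd c j}) then gg k F r (\<lambda>j. x (m j)) else 0)
        = GG k F x i0 m * (\<Prod>j\<in>J. EE x (w j) (m j))"
      unfolding GG_def r_def J_def by auto
  qed
  finally show ?thesis unfolding r_def J_def N_def .
qed



lemma gg_cong: "(\<And>j. j \<in> {2..k+1} \<Longrightarrow> e j = e' j) \<Longrightarrow> gg k F r e = gg k F r e'"
  unfolding gg_def by (intro sum.cong PiE_cong prod.cong) auto

lemma ramanujan_c_1: "ramanujan_c a 1 = moebius_mu a"
proof -
  have "{d. d dvd gcd a 1} = {1::nat}" by auto
  then show ?thesis unfolding ramanujan_c_def by simp
qed

lemma gg_diag:
  assumes r: "(r::nat) > 0"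
  shows "gg k F r (\<lambda>_. r) = of_nat r ^ k * fourier_alpha k F r (replicate k r)"
proof -
  define J where "J = {2..k+1}"
  define L where "L = {\<delta>s. length \<delta>s = k \<and> (\<forall>\<delta>\<in>set \<delta>s. \<delta> dvd r)}"
  have fa: "fourier_alpha k F r (replicate k r) = 1 / of_nat r ^ k *
      (\<Sum>\<delta>s\<in>L. F r \<delta>s * (\<Prod>i<k. of_int (moebius_mu (r div (\<delta>s ! i)))))"
    unfolding fourier_alpha_def L_def
    by (intro arg_cong[where f="\<lambda>z. 1 / of_nat r ^ k * z"] sum.cong prod.cong refl)
       (use r in \<open>auto simp: ramanujan_c_1 ramanujan_c_1[unfolded One_nat_def]\<close>)
  have "gg k F r (\<lambda>_. r) = (\<Sum>d\<in>PiE J (\<lambda>_. {t. t dvd r}). F r (map d [2..<k+2]) *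
                 (\<Prod>j\<in>J. of_int (moebius_mu (r div d j))))"
    unfolding gg_def Phi_def J_def ..
  also have "\<dots> = (\<Sum>\<delta>s\<in>L. F r \<delta>s * (\<Prod>i<k. of_int (moebius_mu (r div (\<delta>s ! i)))))"
  proof (rule sum.reindex_bij_witness[of _ "\<lambda>\<delta>s. restrict (\<lambda>j. \<delta>s ! (j - 2)) J" "\<lambda>d. map d [2..<k+2]"])
    fix \<delta>s assume d: "\<delta>s \<in> L"
    then have len: "length \<delta>s = k" unfolding L_def by simp
    have mp: "map (restrict (\<lambda>j. \<delta>s ! (j - 2)) J) [2..<k+2] = \<delta>s"
      by (rule nth_equalityI) (auto simp: len J_def simp del: upt_Suc)
    then show "map (restrict (\<lambda>j. \<delta>s ! (j - 2)) J) [2..<k+2] = \<delta>s" .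
    show "restrict (\<lambda>j. \<delta>s ! (j - 2)) J \<in> PiE J (\<lambda>_. {t. t dvd r})"
      using d len unfolding L_def J_def by (auto intro!: nth_mem)
  next
    fix d assume d: "d \<in> PiE J (\<lambda>_. {t. t dvd r})"
    show "restrict (\<lambda>j. map d [2..<k + 2] ! (j - 2)) J = d"
    proof (rule ext)
      fix j
      show "restrict (\<lambda>j. map d [2..<k + 2] ! (j - 2)) J j = d j"
      proof (cases "j \<in> J")
        case True
        then have "j - 2 < k" "2 + (j - 2) = j" unfolding J_def by auto
        then show ?thesis using True by (simp del: upt_Suc)
      next
        case False
        then show ?thesis using d by (auto simp: PiE_iff extensional_def)
      qed
    qed
    show "map d [2..<k + 2] \<in> L"
      using d unfolding L_def J_def by auto
    have "(\<Prod>i<k. (of_int (moebius_mu (r div (map d [2..<k+2] ! i))) :: complex))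
        = (\<Prod>j\<in>J. of_int (moebius_mu (r div d j)))"
      by (rule prod.reindex_bij_witness[of _ "\<lambda>j. j - 2" "\<lambda>i. i + 2"]) (auto simp: J_def simp del: upt_Suc)
    then show "F r (map d [2..<k + 2]) * (\<Prod>i<k. of_int (moebius_mu (r div map d [2..<k + 2] ! i))) =
          F r (map d [2..<k + 2]) * (\<Prod>j\<in>J. of_int (moebius_mu (r div d j)))" by simp
  qed
  finally show ?thesis unfolding fa using r by simp
qed



definition Dsum :: "(nat \<Rightarrow> nat) \<Rightarrow> nat \<Rightarrow> (nat \<Rightarrow> nat) \<Rightarrow> complex" where
  "Dsum x n \<mu> = (\<Sum>\<tau>\<in>{\<tau>. \<tau> permutes {1..n}}. of_int (sign \<tau>) * (\<Prod>v\<in>{1..n}. EE x (\<tau> v) (\<mu> v)))"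

lemma expand:
  fixes n k :: nat and x :: "nat \<Rightarrow> nat" and F :: "nat \<Rightarrow> nat list \<Rightarrow> complex"
  assumes inj: "inj_on x {1..n}" and pos: "\<forall>i\<in>{1..n}. 0 < x i"
    and fc: "factor_closed (x ` {1..n})" and ev: "even_mod k F"
    and JI: "\<forall>j\<in>{2..k+1}. j \<in> I"
  shows "hyperdet (k+1) n I (\<lambda>is. F (x (is ! 0)) (map x (tl is))) =
    1 / of_nat (fact n) * (\<Sum>\<nu>\<in>PiE {1..n} (\<lambda>_. PiE {2..k+1} (\<lambda>_. {1..n})).
       (\<Sum>p\<in>{p. p permutes {1..n}}. (if 1 \<in> I then of_int (sign p) else 1) * (\<Prod>v\<in>{1..n}. GG k F x (p v) (\<nu> v)))
       * (\<Prod>j\<in>{2..k+1}. Dsum x n (\<lambda>v. \<nu> v j)))"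
proof -
  define J where "J = {2..k+1}"
  define N where "N = {1..n}"
  define P where "P = {p. p permutes N}"
  define M where "M = PiE J (\<lambda>_. N)"
  define C where "C = {1..k+1}"
  have finN: "finite N" and finJ: "finite J" and finC: "finite C" and finP: "finite P"
    unfolding N_def J_def C_def P_def by (auto intro: finite_permutations)
  have finM: "finite M" unfolding M_def using finJ finN by (intro finite_PiE) auto
  have C: "C = insert 1 J" "1 \<notin> J" unfolding C_def J_def by auto
  define s1 where "s1 = (\<lambda>p::nat \<Rightarrow> nat. if 1 \<in> I then of_int (sign p) else (1::complex))"
  define T where "T = (\<lambda>(\<sigma>::nat \<Rightarrow> nat \<Rightarrow> nat) (\<nu>::nat \<Rightarrow> nat \<Rightarrow> nat). (\<Prod>v\<in>N. GG k F x (\<sigma> 1 v) (\<nu> v) * (\<Prod>j\<in>J. EE x (\<sigma> j v) (\<nu> v j))))"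
  define s where "s = (\<lambda>\<sigma>::nat \<Rightarrow> nat \<Rightarrow> nat. (\<Prod>j\<in>C. if j \<in> I then of_int (sign (\<sigma> j)) else (1::complex)))"
  have entry: "(\<lambda>is. F (x (is ! 0)) (map x (tl is))) (map (\<lambda>j. \<sigma> j v) [1..<k+1+1])
      = (\<Sum>m\<in>M. GG k F x (\<sigma> 1 v) m * (\<Prod>j\<in>J. EE x (\<sigma> j v) (m j)))"
    if \<sigma>: "\<sigma> \<in> PiE C (\<lambda>_. P)" and v: "v \<in> N" for \<sigma> v
  proof -
    have "[1..<k+1+1] = 1 # [2..<k+2]" by (simp add: upt_conv_Cons numeral_2_eq_2 del: upt_Suc)
    then have "(\<lambda>is. F (x (is ! 0)) (map x (tl is))) (map (\<lambda>j. \<sigma> j v) [1..<k+1+1])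
        = F (x (\<sigma> 1 v)) (map (\<lambda>j. x (\<sigma> j v)) [2..<k+2])" by (simp add: comp_def del: upt_Suc)
    also have "\<dots> = (\<Sum>m\<in>M. GG k F x (\<sigma> 1 v) m * (\<Prod>j\<in>J. EE x (\<sigma> j v) (m j)))"
      unfolding M_def J_def N_def
    proof (rule entry_decomp[OF inj pos fc ev])
      have "\<sigma> 1 permutes N" using \<sigma> unfolding C_def P_def by auto
      then have "\<sigma> 1 v \<in> N" using v by (simp add: permutes_in_image)
      then show "\<sigma> 1 v \<in> {1..n}" unfolding N_def .
      show "\<forall>j\<in>{2..k+1}. \<sigma> j v \<in> {1..n}"
      proof
        fix j assume "j \<in> {2..k+1}"
        then have "\<sigma> j permutes N" using \<sigma> unfolding C_def P_def by auto
        then have "\<sigma> j v \<in> N" using v by (simp add: permutes_in_image)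
        then show "\<sigma> j v \<in> {1..n}" unfolding N_def .
      qed
    qed
    finally show ?thesis .
  qed
  have "hyperdet (k+1) n I (\<lambda>is. F (x (is ! 0)) (map x (tl is))) =
     1 / of_nat (fact n) * (\<Sum>\<sigma>\<in>PiE C (\<lambda>_. P). s \<sigma> * (\<Prod>v\<in>N. (\<lambda>is. F (x (is ! 0)) (map x (tl is))) (map (\<lambda>j. \<sigma> j v) [1..<k+1+1])))"
    unfolding hyperdet_def s_def C_def N_def P_def by (rule refl)
  also have "\<dots> = 1 / of_nat (fact n) * (\<Sum>\<sigma>\<in>PiE C (\<lambda>_. P). s \<sigma> * (\<Prod>v\<in>N. \<Sum>m\<in>M. GG k F x (\<sigma> 1 v) m * (\<Prod>j\<in>J. EE x (\<sigma> j v) (m j))))"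
    by (rule arg_cong[where f="\<lambda>z. 1 / of_nat (fact n) * z"], rule sum.cong[OF refl],
        rule arg_cong2[where f="(*)", OF refl], rule prod.cong[OF refl], rule entry)
  also have "\<dots> = 1 / of_nat (fact n) * (\<Sum>\<sigma>\<in>PiE C (\<lambda>_. P). \<Sum>\<nu>\<in>PiE N (\<lambda>_. M). s \<sigma> * T \<sigma> \<nu>)"
    unfolding T_def using finN finM by (simp add: prod_sum_PiE sum_distrib_left)
  also have "\<dots> = 1 / of_nat (fact n) * (\<Sum>\<nu>\<in>PiE N (\<lambda>_. M). \<Sum>\<sigma>\<in>PiE C (\<lambda>_. P). s \<sigma> * T \<sigma> \<nu>)"
    by (subst sum.swap) rule
  also have "\<dots> = 1 / of_nat (fact n) * (\<Sum>\<nu>\<in>PiE N (\<lambda>_. M).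
       (\<Sum>p\<in>P. s1 p * (\<Prod>v\<in>N. GG k F x (p v) (\<nu> v))) * (\<Prod>j\<in>J. Dsum x n (\<lambda>v. \<nu> v j)))"
  proof (intro arg_cong[where f="\<lambda>z. 1 / of_nat (fact n) * z"] sum.cong refl)
    fix \<nu> assume \<nu>: "\<nu> \<in> PiE N (\<lambda>_. M)"
    define h where "h = (\<lambda>(j::nat) (p::nat \<Rightarrow> nat). if j = 1 then s1 p * (\<Prod>v\<in>N. GG k F x (p v) (\<nu> v))
                          else of_int (sign p) * (\<Prod>v\<in>N. EE x (p v) (\<nu> v j)))"
    have "(\<Sum>\<sigma>\<in>PiE C (\<lambda>_. P). s \<sigma> * T \<sigma> \<nu>) = (\<Sum>\<sigma>\<in>PiE C (\<lambda>_. P). \<Prod>j\<in>C. h j (\<sigma> j))"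
    proof (rule sum.cong[OF refl])
      fix \<sigma> assume \<sigma>: "\<sigma> \<in> PiE C (\<lambda>_. P)"
      have "s \<sigma> = s1 (\<sigma> 1) * (\<Prod>j\<in>J. of_int (sign (\<sigma> j)))"
        unfolding s_def s1_def C using finJ JI by (simp add: J_def)
      moreover have "T \<sigma> \<nu> = (\<Prod>v\<in>N. GG k F x (\<sigma> 1 v) (\<nu> v)) * (\<Prod>j\<in>J. \<Prod>v\<in>N. EE x (\<sigma> j v) (\<nu> v j))"
        unfolding T_def prod.distrib by (subst prod.swap) rule
      moreover have "(\<Prod>j\<in>C. h j (\<sigma> j)) = s1 (\<sigma> 1) * (\<Prod>v\<in>N. GG k F x (\<sigma> 1 v) (\<nu> v)) *
           ((\<Prod>j\<in>J. of_int (sign (\<sigma> j))) * (\<Prod>j\<in>J. \<Prod>v\<in>N. EE x (\<sigma> j v) (\<nu> v j)))"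
      proof -
        have "(\<Prod>j\<in>C. h j (\<sigma> j)) = h 1 (\<sigma> 1) * (\<Prod>j\<in>J. h j (\<sigma> j))"
          unfolding C(1) by (rule prod.insert[OF finJ C(2)])
        also have "(\<Prod>j\<in>J. h j (\<sigma> j)) = (\<Prod>j\<in>J. of_int (sign (\<sigma> j)) * (\<Prod>v\<in>N. EE x (\<sigma> j v) (\<nu> v j)))"
          using C(2) unfolding h_def by (intro prod.cong refl) auto
        finally show ?thesis unfolding prod.distrib h_def by simp
      qed
      ultimately show "s \<sigma> * T \<sigma> \<nu> = (\<Prod>j\<in>C. h j (\<sigma> j))" by (simp add: mult_ac)
    qed
    also have "\<dots> = (\<Prod>j\<in>C. \<Sum>p\<in>P. h j p)"
      using finC finP by (subst prod_sum_PiE) auto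
    also have "\<dots> = (\<Sum>p\<in>P. h 1 p) * (\<Prod>j\<in>J. \<Sum>p\<in>P. h j p)"
      unfolding C(1) by (rule prod.insert[OF finJ C(2)])
    also have "\<dots> = (\<Sum>p\<in>P. s1 p * (\<Prod>v\<in>N. GG k F x (p v) (\<nu> v))) * (\<Prod>j\<in>J. Dsum x n (\<lambda>v. \<nu> v j))"
      using C(2) unfolding h_def Dsum_def P_def N_def by (intro arg_cong2[where f="(*)"] prod.cong sum.cong refl) auto
    finally show "(\<Sum>\<sigma>\<in>PiE C (\<lambda>_. P). s \<sigma> * T \<sigma> \<nu>) =
      (\<Sum>p\<in>P. s1 p * (\<Prod>v\<in>N. GG k F x (p v) (\<nu> v))) * (\<Prod>j\<in>J. Dsum x n (\<lambda>v. \<nu> v j))" .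
  qed
  finally show ?thesis unfolding J_def N_def P_def M_def s1_def .
qed



lemma collapse:
  fixes n k :: nat and x :: "nat \<Rightarrow> nat" and F :: "nat \<Rightarrow> nat list \<Rightarrow> complex" and s1 :: "(nat \<Rightarrow> nat) \<Rightarrow> complex"
  assumes inj: "inj_on x {1..n}" and pos: "\<forall>i\<in>{1..n}. 0 < x i"
  shows "(\<Sum>\<nu>\<in>PiE {1..n} (\<lambda>_. PiE {2..k+1} (\<lambda>_. {1..n})).
       (\<Sum>p\<in>{p. p permutes {1..n}}. s1 p * (\<Prod>v\<in>{1..n}. GG k F x (p v) (\<nu> v)))
       * (\<Prod>j\<in>{2..k+1}. Dsum x n (\<lambda>v. \<nu> v j)))
     = (\<Sum>p\<in>{p. p permutes {1..n}}. s1 p * of_int (sign p) ^ k * (\<Prod>v\<in>{1..n}. GG k F x v (restrict (\<lambda>j. v) {2..k+1})))"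
proof -
  define J where "J = {2..k+1}"
  define N where "N = {1..n}"
  define P where "P = {p. p permutes N}"
  define M where "M = PiE J (\<lambda>_. N)"
  define Q where "Q = PiE N (\<lambda>_. M)"
  define Good where "Good = {\<nu>\<in>Q. \<forall>j\<in>J. inj_on (\<lambda>v. \<nu> v j) N}"
  define qf where "qf = (\<lambda>(\<nu>::nat \<Rightarrow> nat \<Rightarrow> nat) (j::nat) v. if v \<in> N then \<nu> v j else (v::nat))"
  have finN: "finite N" and finJ: "finite J" and finP: "finite P" and cardJ: "card J = k"
    unfolding N_def J_def P_def by (auto intro: finite_permutations)
  have finM: "finite M" unfolding M_def using finJ finN by (intro finite_PiE) auto
  have finQ: "finite Q" unfolding Q_def using finM finN by (intro finite_PiE) auto
  have GoodQ: "Good \<subseteq> Q" unfolding Good_def by auto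
  have finG: "finite Good" using finQ GoodQ by (rule finite_subset[rotated])
  have inN: "\<nu> v j \<in> N" if "\<nu> \<in> Q" "v \<in> N" "j \<in> J" for \<nu> v j
    using that unfolding Q_def M_def by auto
  have qperm: "qf \<nu> j permutes N" if \<nu>: "\<nu> \<in> Q" and j: "j \<in> J" and i: "inj_on (\<lambda>v. \<nu> v j) N" for \<nu> j
  proof (rule bij_imp_permutes)
    have inj': "inj_on (qf \<nu> j) N" using i unfolding qf_def inj_on_def by auto
    moreover have "qf \<nu> j ` N \<subseteq> N" using inN[OF \<nu> _ j] unfolding qf_def by auto
    ultimately have "qf \<nu> j ` N = N" using finN by (intro endo_inj_surj) auto
    then show "bij_betw (qf \<nu> j) N N" using inj' unfolding bij_betw_def by auto
    show "\<And>v. v \<notin> N \<Longrightarrow> qf \<nu> j v = v" unfolding qf_def by simp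
  qed
  have Dq: "Dsum x n (\<lambda>v. \<nu> v j) = of_int (sign (qf \<nu> j))"
    if \<nu>: "\<nu> \<in> Q" and j: "j \<in> J" and i: "inj_on (\<lambda>v. \<nu> v j) N" for \<nu> j
  proof -
    have "Dsum x n (\<lambda>v. \<nu> v j) = (\<Sum>\<tau>\<in>{\<tau>. \<tau> permutes N}. of_int (sign \<tau>) *
            (\<Prod>v\<in>N. (if x (qf \<nu> j v) dvd x (\<tau> v) then 1 else 0 :: complex)))"
      unfolding Dsum_def EE_def N_def[symmetric] qf_def by (intro sum.cong prod.cong refl) auto
    also have "\<dots> = of_int (sign (qf \<nu> j))"
      using det_tri[OF finN _ _ qperm[OF \<nu> j i], of x] inj pos unfolding N_def by simp
    finally show ?thesis .
  qed
  have D0: "(\<Prod>j\<in>J. Dsum x n (\<lambda>v. \<nu> v j)) = 0" if \<nu>: "\<nu> \<in> Q - Good" for \<nu>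
  proof -
    from \<nu> obtain j where j: "j \<in> J" "\<not> inj_on (\<lambda>v. \<nu> v j) N" unfolding Good_def by auto
    then obtain a b where ab: "a \<in> N" "b \<in> N" "a \<noteq> b" "\<nu> a j = \<nu> b j" unfolding inj_on_def by auto
    have "Dsum x n (\<lambda>v. \<nu> v j) = 0"
      unfolding Dsum_def N_def[symmetric] using det_repeat_zero[OF finN ab, of "EE x"] by simp
    then show ?thesis using j finJ by (intro prod_zero) auto
  qed
  define \<Gamma> where "\<Gamma> = (\<lambda>p \<nu>. s1 p * (\<Prod>v\<in>N. GG k F x (p v) (\<nu> v)))"
  have "(\<Sum>\<nu>\<in>Q. (\<Sum>p\<in>P. \<Gamma> p \<nu>) * (\<Prod>j\<in>J. Dsum x n (\<lambda>v. \<nu> v j)))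
      = (\<Sum>\<nu>\<in>Good. (\<Sum>p\<in>P. \<Gamma> p \<nu>) * (\<Prod>j\<in>J. Dsum x n (\<lambda>v. \<nu> v j)))"
    using finQ GoodQ D0 by (intro sum.mono_neutral_right) auto
  also have "\<dots> = (\<Sum>\<nu>\<in>Good. \<Sum>p\<in>P. \<Gamma> p \<nu> * (\<Prod>j\<in>J. of_int (sign (qf \<nu> j))))"
  proof (rule sum.cong[OF refl])
    fix \<nu> assume "\<nu> \<in> Good"
    then have "\<nu> \<in> Q" "\<forall>j\<in>J. inj_on (\<lambda>v. \<nu> v j) N" unfolding Good_def by auto
    then have "(\<Prod>j\<in>J. Dsum x n (\<lambda>v. \<nu> v j)) = (\<Prod>j\<in>J. of_int (sign (qf \<nu> j)))"
      using Dq by (intro prod.cong) auto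
    then show "(\<Sum>p\<in>P. \<Gamma> p \<nu>) * (\<Prod>j\<in>J. Dsum x n (\<lambda>v. \<nu> v j)) =
        (\<Sum>p\<in>P. \<Gamma> p \<nu> * (\<Prod>j\<in>J. of_int (sign (qf \<nu> j))))" by (simp add: sum_distrib_right)
  qed
  also have "\<dots> = (\<Sum>p\<in>P. \<Sum>\<nu>\<in>Good. \<Gamma> p \<nu> * (\<Prod>j\<in>J. of_int (sign (qf \<nu> j))))"
    by (rule sum.swap)
  also have "\<dots> = (\<Sum>p\<in>P. s1 p * of_int (sign p) ^ k * (\<Prod>v\<in>N. GG k F x v (restrict (\<lambda>j. v) J)))"
  proof (rule sum.cong[OF refl])
    fix p assume "p \<in> P"
    then have p: "p permutes N" unfolding P_def by simp
    have pN: "p v \<in> N" if "v \<in> N" for v using p that by (simp add: permutes_in_image)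
    define \<nu>p where "\<nu>p = restrict (\<lambda>v. restrict (\<lambda>j. p v) J) N"
    have \<nu>pQ: "\<nu>p \<in> Q" unfolding \<nu>p_def Q_def M_def using pN by auto
    have \<nu>pG: "\<nu>p \<in> Good" unfolding Good_def using \<nu>pQ permutes_inj_on[OF p]
      by (auto simp: \<nu>p_def inj_on_def)
    have qp: "qf \<nu>p j = p" if "j \<in> J" for j
      using that permutes_not_in[OF p] unfolding qf_def \<nu>p_def by auto
    have z: "\<Gamma> p \<nu> = 0" if \<nu>: "\<nu> \<in> Good - {\<nu>p}" for \<nu>
    proof (rule ccontr)
      assume nz: "\<Gamma> p \<nu> \<noteq> 0"
      from \<nu> have \<nu>Q: "\<nu> \<in> Q" and \<nu>i: "\<forall>j\<in>J. inj_on (\<lambda>v. \<nu> v j) N" unfolding Good_def by auto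
      have "\<forall>v\<in>N. GG k F x (p v) (\<nu> v) \<noteq> 0" using nz finN unfolding \<Gamma>_def by auto
      then have dv: "\<forall>v\<in>N. \<forall>j\<in>J. x (\<nu> v j) dvd x (p v)" unfolding GG_def J_def by (auto split: if_splits)
      have eq: "\<nu> v j = p v" if v: "v \<in> N" and j: "j \<in> J" for v j
      proof -
        have qpm: "qf \<nu> j permutes N" using qperm[OF \<nu>Q j] \<nu>i j by auto
        have "\<forall>v\<in>N. x (qf \<nu> j v) \<le> x (p v)"
        proof
          fix v assume v: "v \<in> N"
          have "x (p v) > 0" using pos pN[OF v] unfolding N_def by auto
          then show "x (qf \<nu> j v) \<le> x (p v)" using dv v j unfolding qf_def by (auto intro: dvd_imp_le)
        qed
        then have "\<forall>v\<in>N. qf \<nu> j v = p v" using perm_le_eq[OF p qpm finN, of x] inj unfolding N_def by auto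
        then show ?thesis using v unfolding qf_def by auto
      qed
      have "\<nu> = \<nu>p"
      proof (rule ext)
        fix v show "\<nu> v = \<nu>p v"
        proof (cases "v \<in> N")
          case True
          then have "\<nu> v \<in> M" using \<nu>Q unfolding Q_def by auto
          then show ?thesis using True eq unfolding \<nu>p_def M_def by (auto simp: PiE_iff extensional_def)
        next
          case False
          then show ?thesis using \<nu>Q unfolding \<nu>p_def Q_def by (auto simp: PiE_iff extensional_def)
        qed
      qed
      then show False using \<nu> by simp
    qed
    have "(\<Sum>\<nu>\<in>Good. \<Gamma> p \<nu> * (\<Prod>j\<in>J. of_int (sign (qf \<nu> j))))
        = \<Gamma> p \<nu>p * (\<Prod>j\<in>J. of_int (sign (qf \<nu>p j))) + (\<Sum>\<nu>\<in>Good - {\<nu>p}. \<Gamma> p \<nu> * (\<Prod>j\<in>J. of_int (sign (qf \<nu> j))))"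
      using finG \<nu>pG by (subst sum.remove[of _ \<nu>p]) auto
    also have "(\<Sum>\<nu>\<in>Good - {\<nu>p}. \<Gamma> p \<nu> * (\<Prod>j\<in>J. of_int (sign (qf \<nu> j)))) = 0"
      using z by (intro sum.neutral) auto
    also have "(\<Prod>j\<in>J. of_int (sign (qf \<nu>p j))) = (of_int (sign p) :: complex) ^ k"
      using qp cardJ by simp
    also have "\<Gamma> p \<nu>p = s1 p * (\<Prod>v\<in>N. GG k F x (p v) (restrict (\<lambda>j. p v) J))"
      unfolding \<Gamma>_def \<nu>p_def by (intro arg_cong2[where f="(*)"] refl prod.cong) auto
    also have "(\<Prod>v\<in>N. GG k F x (p v) (restrict (\<lambda>j. p v) J)) = (\<Prod>v\<in>N. GG k F x v (restrict (\<lambda>j. v) J))"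
      using prod.permute[OF p, of "\<lambda>v. GG k F x v (restrict (\<lambda>j. v) J)"] by (simp add: comp_def)
    finally show "(\<Sum>\<nu>\<in>Good. \<Gamma> p \<nu> * (\<Prod>j\<in>J. of_int (sign (qf \<nu> j))))
        = s1 p * of_int (sign p) ^ k * (\<Prod>v\<in>N. GG k F x v (restrict (\<lambda>j. v) J))" by (simp add: mult_ac)
  qed
  finally show ?thesis unfolding \<Gamma>_def Q_def M_def P_def N_def J_def .
qed



lemma sign_pow_even:
  assumes "even m"
  shows "(of_int (sign p) :: complex) ^ m = 1"
proof -
  obtain b where b: "m = 2 * b" using assms by (auto elim: evenE)
  have "(sign p)^2 = (1::int)" by (simp add: power2_eq_square sign_idempotent)
  then have "(sign p) ^ m = (1::int)" unfolding b power_mult by simp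
  then have "of_int ((sign p) ^ m) = (1::complex)" by simp
  then show ?thesis by simp
qed

theorem theorem4p6:
  fixes n k :: nat and x :: "nat \<Rightarrow> nat" and F :: "nat \<Rightarrow> nat list \<Rightarrow> complex"
    and I :: "nat set"
  assumes inj: "inj_on x {1..n}"
    and pos: "\<forall>i\<in>{1..n}. 0 < x i"
    and fc: "factor_closed (x ` {1..n})"
    and ev: "even_mod k F"
    and I_def: "I = (if even k then {2..k+1} else {1..k+1})"
  shows "hyperdet (k+1) n I (\<lambda>is. F (x (is ! 0)) (map x (tl is))) =
         (\<Prod>v\<in>{1..n}. of_nat (x v)) ^ k * (\<Prod>v\<in>{1..n}. fourier_alpha k F (x v) (replicate k (x v)))"
proof -
  define s1 where "s1 = (\<lambda>p::nat \<Rightarrow> nat. if 1 \<in> I then of_int (sign p) else (1::complex))"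
  define G0 where "G0 = (\<Prod>v\<in>{1..n}. GG k F x v (restrict (\<lambda>j. v) {2..k+1}))"
  have JI: "\<forall>j\<in>{2..k+1}. j \<in> I" unfolding I_def by auto
  have s1k: "s1 p * of_int (sign p) ^ k = 1" for p
  proof (cases "even k")
    case True
    then have "1 \<notin> I" unfolding I_def by auto
    moreover have "(of_int (sign p) :: complex) ^ k = 1"
      using True by (rule sign_pow_even)
    ultimately show ?thesis unfolding s1_def by simp
  next
    case False
    then have "1 \<in> I" unfolding I_def by auto
    moreover have "(of_int (sign p) :: complex) * of_int (sign p) ^ k = 1"
    proof -
      have "even (Suc k)" using False by simp
      then have "(of_int (sign p) :: complex) ^ Suc k = 1"
        by (rule sign_pow_even)
      then show ?thesis by simp
    qed
    ultimately show ?thesis unfolding s1_def by simp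
  qed
  have "hyperdet (k+1) n I (\<lambda>is. F (x (is ! 0)) (map x (tl is))) =
    1 / of_nat (fact n) * (\<Sum>p\<in>{p. p permutes {1..n}}. s1 p * of_int (sign p) ^ k * G0)"
    unfolding expand[OF inj pos fc ev JI] collapse[OF inj pos] s1_def G0_def ..
  also have "\<dots> = 1 / of_nat (fact n) * (of_nat (fact n) * G0)"
    using card_permutations[of "{1..n}" n] by (simp add: s1k)
  also have "\<dots> = G0" by simp
  also have "\<dots> = (\<Prod>v\<in>{1..n}. of_nat (x v) ^ k * fourier_alpha k F (x v) (replicate k (x v)))"
    unfolding G0_def
  proof (rule prod.cong[OF refl])
    fix v assume v: "v \<in> {1..n}"
    have "GG k F x v (restrict (\<lambda>j. v) {2..k+1}) = gg k F (x v) (\<lambda>_. x v)"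
      unfolding GG_def by (auto intro: gg_cong)
    also have "\<dots> = of_nat (x v) ^ k * fourier_alpha k F (x v) (replicate k (x v))"
      using pos v by (intro gg_diag) auto
    finally show "GG k F x v (restrict (\<lambda>j. v) {2..k+1}) = of_nat (x v) ^ k * fourier_alpha k F (x v) (replicate k (x v))" .
  qed
  also have "\<dots> = (\<Prod>v\<in>{1..n}. of_nat (x v)) ^ k * (\<Prod>v\<in>{1..n}. fourier_alpha k F (x v) (replicate k (x v)))"
    by (simp add: prod.distrib prod_power_distrib)
  finally show ?thesis .
qed

end
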